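(* Let $A(x)=x^3$ on $J=\mathbb R$ and $\Gamma=\{x+iA(x):x\in\mathbb R\}$. There exist $\delta_0=\delta_0(A)>0$ and $c_0=c_0(A)\in(0,1)$ such that $$\mathtt S[\mathrm{Re}K_\Gamma](\mathbf z)\ge c_0\,M_\epsilon^2$$ for $\mathbf z=(-\epsilon\alpha-i\epsilon^3\alpha^3,\ 0,\ \epsilon\beta+i\epsilon^3\beta^3)$, for all $\alpha,\beta\in[1/2,1]$ and all $0<\epsilon<\min\{1,\delta_0\}$, where $M_\epsilon$ is the Lipschitz constant of the restriction of $A'$ to the interval $(-\epsilon,\epsilon)$.
   Context: $s(x)=\sqrt{1+(A'(x))^2}$. The kernel (normalizing factor $1/(2\pi)$ omitted) is $K_\Gamma(w,z)=\dfrac{A'(x)-i}{s(x)\,[\,x-y+i(A(x)-A(y))\,]}$ for $w=x+iA(x)$, $z=y+iA(y)$, $x\neq y$; $\mathrm{Re}K_\Gamma$ is its real part. For a real-valued $K$ and distinct $z_1,z_2,z_3$, $\mathtt S[K](\mathbf z)=\sum_{\sigma\in S_3}K(z_{\sigma(1)},z_{\sigma(2)})K(z_{\sigma(1)},z_{\sigma(3)})$. The Lipschitz constant of $A'$ on $(-\epsilon,\epsilon)$ is $\sup_{x\neq y\in(-\epsilon,\epsilon)}|A'(x)-A'(y)|/|x-y|$. *)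

theory Defs
  imports "HOL-Analysis.Analysis" "HOL-Combinatorics.Permutations"
begin

definition cubeA :: "real \<Rightarrow> real" where
  "cubeA x = x ^ 3"

definition arcfac :: "(real \<Rightarrow> real) \<Rightarrow> real \<Rightarrow> real" where
  "arcfac A x = sqrt (1 + (deriv A x)\<^sup>2)"

text \<open>Kernel K_Gamma(w,z) for w = x + i A(x), z = y + i A(y) on the graph of A
  (so x = Re w, y = Re z); normalizing factor 1/(2 pi) omitted.\<close>
definition KGamma :: "(real \<Rightarrow> real) \<Rightarrow> complex \<Rightarrow> complex \<Rightarrow> complex" where
  "KGamma A w z =
     (let x = Re w; y = Re z in
      (complex_of_real (deriv A x) - \<i>) /
      (complex_of_real (arcfac A x) *
       (complex_of_real (x - y) + \<i> * complex_of_real (A x - A y))))"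

definition ReKGamma :: "(real \<Rightarrow> real) \<Rightarrow> complex \<Rightarrow> complex \<Rightarrow> real" where
  "ReKGamma A w z = Re (KGamma A w z)"

definition symS :: "(complex \<Rightarrow> complex \<Rightarrow> real) \<Rightarrow> complex \<Rightarrow> complex \<Rightarrow> complex \<Rightarrow> real" where
  "symS K z1 z2 z3 =
     (let pt = (\<lambda>i::nat. if i = 1 then z1 else if i = 2 then z2 else z3) in
      \<Sum>\<sigma> | \<sigma> permutes {1::nat,2,3}.
        K (pt (\<sigma> 1)) (pt (\<sigma> 2)) * K (pt (\<sigma> 1)) (pt (\<sigma> 3)))"

definition lipconst :: "(real \<Rightarrow> real) \<Rightarrow> real \<Rightarrow> real" where
  "lipconst f eps =
     Sup {\<bar>f x - f y\<bar> / \<bar>x - y\<bar> | x y. x \<in> {-eps<..<eps} \<and> y \<in> {-eps<..<eps} \<and> x \<noteq> y}"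

end

theory Submission
  imports Defs
begin
lemma symS_expand:
  "symS K z1 z2 z3 = 2 * (K z1 z2 * K z1 z3 + K z2 z1 * K z2 z3 + K z3 z1 * K z3 z2)"
proof -
  have e: "{p. p permutes {3::nat}} = {id}" by simp
  show ?thesis
    unfolding symS_def Let_def
    by (simp add: sum_over_permutations_insert e transpose_def algebra_simps)
qed

lemma deriv_cube: "deriv cubeA x = 3 * x^2"
  unfolding cubeA_def
  by (rule DERIV_imp_deriv) (auto intro!: derivative_eq_intros)

lemma ReK: assumes "Re w \<noteq> Re z"
  shows "ReKGamma cubeA w z = (2 * Re w + Re z) /
     (sqrt (1 + 9 * (Re w)^4) * (1 + ((Re w)^2 + Re w * Re z + (Re z)^2)^2))"
proof -
  define x where "x = Re w"
  define y where "y = Re z"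
  define s where "s = sqrt (1 + 9 * x^4)"
  define q where "q = x^2 + x*y + y^2"
  have s: "s > 0" unfolding s_def by (simp add: add_pos_nonneg)
  have d: "x - y \<noteq> 0" using assms x_def y_def by simp
  have ar: "arcfac cubeA x = s" unfolding arcfac_def deriv_cube s_def
    by (simp add: power2_eq_square power4_eq_xxxx)
  have cq: "cubeA x - cubeA y = (x - y) * q" unfolding cubeA_def q_def by algebra
  have "ReKGamma cubeA w z = Re ((complex_of_real (3*x^2) - \<i>) /
       (complex_of_real s * (complex_of_real (x - y) * (1 + \<i> * complex_of_real q))))"
    unfolding ReKGamma_def KGamma_def Let_def x_def[symmetric] y_def[symmetric] ar deriv_cube cq
    by (simp add: algebra_simps)
  also have "\<dots> = (3*x^2 - q) / (s * (x - y) * (1 + q^2))"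
  proof -
    have q1: "1 + q^2 > 0" by (simp add: add_pos_nonneg)
    have nz1: "s * (x - y) * (1 + q^2) \<noteq> 0" using s d q1 by simp
    have nz2: "(s * (x - y))^2 * (1 + q^2) \<noteq> 0" using s d q1 by simp
    have "Re ((complex_of_real (3*x^2) - \<i>) /
       (complex_of_real s * (complex_of_real (x - y) * (1 + \<i> * complex_of_real q))))
       = (s*(x-y)*(3*x^2 - q)) / ((s*(x-y))^2 * (1 + q^2))"
      by (simp add: Re_divide complex_norm_square[symmetric] cmod_def power2_eq_square algebra_simps)
    also have "\<dots> = (3*x^2 - q) / (s * (x - y) * (1 + q^2))"
      using nz1 nz2 by (simp add: field_simps power2_eq_square)
    finally show ?thesis .
  qed
  also have "\<dots> = (2*x + y) / (s * (1 + q^2))"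
  proof -
    have "3*x^2 - q = (x - y) * (2*x + y)" unfolding q_def by algebra
    then show ?thesis using d by simp
  qed
  finally show ?thesis unfolding s_def q_def x_def y_def .
qed

lemma lip_bound: assumes "e > 0"
  shows "0 \<le> lipconst (deriv cubeA) e \<and> lipconst (deriv cubeA) e \<le> 6 * e"
proof -
  define S where "S = {\<bar>deriv cubeA x - deriv cubeA y\<bar> / \<bar>x - y\<bar> | x y.
      x \<in> {-e<..<e} \<and> y \<in> {-e<..<e} \<and> x \<noteq> y}"
  have ub: "t \<le> 6 * e" if "t \<in> S" for t
  proof -
    obtain x y where t: "t = \<bar>deriv cubeA x - deriv cubeA y\<bar> / \<bar>x - y\<bar>"
      and xy: "x \<in> {-e<..<e}" "y \<in> {-e<..<e}" "x \<noteq> y"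
      using \<open>t \<in> S\<close> unfolding S_def by blast
    have "deriv cubeA x - deriv cubeA y = 3 * (x + y) * (x - y)"
      unfolding deriv_cube by (simp add: algebra_simps power2_eq_square)
    then have "t = \<bar>3 * x + 3 * y\<bar>" using t xy(3) by (simp add: abs_mult)
    then show ?thesis using xy by auto
  qed
  have mem: "\<bar>deriv cubeA 0 - deriv cubeA (e/2)\<bar> / \<bar>0 - e/2\<bar> \<in> S"
    unfolding S_def using assms
    by (intro CollectI exI[of _ 0] exI[of _ "e/2"]) auto
  have ne: "S \<noteq> {}" using mem by blast
  have bdd: "bdd_above S" using ub by (rule bdd_aboveI)
  have "lipconst (deriv cubeA) e = Sup S" unfolding lipconst_def S_def ..
  moreover have "Sup S \<le> 6 * e" using ne ub by (rule cSup_least)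
  moreover have "0 \<le> Sup S"
    using cSup_upper[OF mem bdd] by (smt (verit) divide_nonneg_nonneg abs_ge_zero)
  ultimately show ?thesis by simp
qed


lemma frac_lb: fixes P D :: real assumes "P \<ge> 0" "0 < D" "D \<le> 2" shows "P / D \<ge> P / 2"
  using assms by (intro divide_left_mono) auto

lemma sum3_mono: fixes x x' y y' z z' c :: real
  assumes "x' \<le> x" "y' \<le> y" "z' \<le> z" "c \<le> 2*(x' + y' + z')"
  shows "c \<le> 2*(x+y+z)"
  using assms by (simp add: algebra_simps)

lemma key_ineq:
  fixes a b e :: real
  assumes a: "e/2 \<le> a" "a \<le> e" and b: "e/2 \<le> b" "b \<le> e" and e: "0 < e" "e < 1/4"
  defines "sa \<equiv> sqrt (1 + 9 * a^4)" and "sb \<equiv> sqrt (1 + 9 * b^4)"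
      and "Q \<equiv> a^2 - a*b + b^2"
  shows "2 * ((-2*a) / (sa * (1 + a^4)) * ((-2*a + b) / (sa * (1 + Q^2)))
          + (-a / (1 + a^4)) * (b / (1 + b^4))
          + ((2*b - a) / (sb * (1 + Q^2))) * ((2*b) / (sb * (1 + b^4))))
        \<ge> 1/100 * (6*e)^2"
proof -
  have a0: "a > 0" "b > 0" using a b e by auto
  have a4: "a^4 \<le> 1/256" "b^4 \<le> 1/256"
  proof -
    have "a^4 \<le> (1/4)^4" using a e a0 by (intro power_mono) auto
    moreover have "b^4 \<le> (1/4)^4" using b e a0 by (intro power_mono) auto
    moreover have "(1/4::real)^4 = 1/256" by (simp add: power_divide)
    ultimately show "a^4 \<le> 1/256" "b^4 \<le> 1/256" by linarith+
  qed
  have Q0: "0 \<le> Q" "Q \<le> 1/8"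
  proof -
    have "a^2 \<le> (1/4)^2" using a e a0 by (intro power_mono) auto
    moreover have "b^2 \<le> (1/4)^2" using b e a0 by (intro power_mono) auto
    moreover have "a*b \<ge> 0" using a0 by simp
    moreover have "Q = (a - b)^2 + a*b" unfolding Q_def by algebra
    moreover have "Q = (a^2 + b^2) - a*b" unfolding Q_def by algebra
    moreover have "(1/4::real)^2 = 1/16" by (simp add: power_divide)
    moreover have "(a - b)^2 \<ge> 0" "e^2 \<ge> 0" by simp_all
    ultimately show "0 \<le> Q" "Q \<le> 1/8" by linarith+
  qed
  have Q2: "Q^2 \<le> 1/64"
  proof -
    have "Q^2 \<le> (1/8)^2" using Q0 by (intro power_mono) auto
    moreover have "(1/8::real)^2 = 1/64" by (simp add: power_divide)
    ultimately show ?thesis by linarith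
  qed
  have sa2: "sa * sa = 1 + 9 * a^4" unfolding sa_def by (simp add: add_nonneg_nonneg)
  have sb2: "sb * sb = 1 + 9 * b^4" unfolding sb_def by (simp add: add_nonneg_nonneg)
  define D1 where "D1 = (1 + 9 * a^4) * (1 + a^4) * (1 + Q^2)"
  define D3 where "D3 = (1 + 9 * b^4) * (1 + b^4) * (1 + Q^2)"
  have D1: "0 < D1" "D1 \<le> 2"
  proof -
    have "D1 \<le> (1 + 9/256) * (1 + 1/256) * (1 + 1/64)" unfolding D1_def
      using a4 Q2 by (intro mult_mono) (auto simp: add_nonneg_nonneg)
    then show "D1 \<le> 2" by simp
    show "0 < D1" unfolding D1_def by (auto intro!: mult_pos_pos add_pos_nonneg)
  qed
  have D3: "0 < D3" "D3 \<le> 2"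
  proof -
    have "D3 \<le> (1 + 9/256) * (1 + 1/256) * (1 + 1/64)" unfolding D3_def
      using a4 Q2 by (intro mult_mono) (auto simp: add_nonneg_nonneg)
    then show "D3 \<le> 2" by simp
    show "0 < D3" unfolding D3_def by (auto intro!: mult_pos_pos add_pos_nonneg)
  qed
  have T1: "(-2*a) / (sa * (1 + a^4)) * ((-2*a + b) / (sa * (1 + Q^2))) = (2*a*(2*a - b)) / D1"
  proof -
    have "(-2*a) / (sa * (1 + a^4)) * ((-2*a + b) / (sa * (1 + Q^2)))
       = ((-2*a)*(-2*a + b)) / ((sa * sa) * ((1 + a^4) * (1 + Q^2)))"
      by (simp add: mult_ac)
    also have "(-2*a)*(-2*a + b) = 2*a*(2*a - b)" by algebra
    finally show ?thesis unfolding D1_def sa2 by (simp add: mult_ac)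
  qed
  have T3: "((2*b - a) / (sb * (1 + Q^2))) * ((2*b) / (sb * (1 + b^4))) = (2*b*(2*b - a)) / D3"
  proof -
    have "((2*b - a) / (sb * (1 + Q^2))) * ((2*b) / (sb * (1 + b^4)))
       = ((2*b)*(2*b - a)) / ((sb * sb) * ((1 + b^4) * (1 + Q^2)))"
      by (simp add: mult_ac)
    then show ?thesis unfolding D3_def sb2 by (simp add: mult_ac)
  qed
  have T2: "(-a / (1 + a^4)) * (b / (1 + b^4)) \<ge> - (a*b)"
  proof -
    have "1 * 1 \<le> (1 + a^4) * (1 + b^4)" by (intro mult_mono) auto
    then have "a*b / ((1 + a^4) * (1 + b^4)) \<le> a*b / 1" using a0
      by (intro divide_left_mono) (auto intro!: mult_pos_pos add_pos_nonneg simp: add_nonneg_nonneg)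
    then show ?thesis by (simp add: field_simps)
  qed
  have L1: "(2*a*(2*a - b)) / D1 \<ge> (2*a*(2*a - b)) / 2"
    using D1 a b a0 by (intro frac_lb) auto
  have L3: "(2*b*(2*b - a)) / D3 \<ge> (2*b*(2*b - a)) / 2"
    using D3 a b a0 by (intro frac_lb) auto
  have fin: "2 * ((2*a*(2*a - b)) / 2 + - (a*b) + (2*b*(2*b - a)) / 2) \<ge> 1/100 * (6*e)^2"
  proof -
    have "e^2 \<le> (2 * a)^2" using a e by (intro power_mono) auto
    moreover have "e^2 \<le> (2 * b)^2" using b e by (intro power_mono) auto
    moreover have "(a - b)^2 \<ge> 0" "e^2 \<ge> 0" by simp_all
    moreover have "(2*a)^2 = 4 * a^2" "(2*b)^2 = 4*b^2" by (simp_all add: power2_eq_square)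
    ultimately have I: "36/100 * e^2 \<le> 3*(a-b)^2 + a^2 + b^2" by linarith
    have E: "2 * ((2*a*(2*a - b)) / 2 + - (a*b) + (2*b*(2*b - a)) / 2) = 3*(a-b)^2 + a^2 + b^2"
      by (simp add: power2_eq_square field_simps)
    have F: "1/100 * (6*e)^2 = 36/100 * e^2" by (simp add: power2_eq_square)
    show ?thesis unfolding E F using I .
  qed
  show ?thesis unfolding T1 T3 by (rule sum3_mono[OF L1 T2 L3 fin])
qed


lemma main_bound:
  fixes \<alpha> \<beta> e :: real
  assumes al: "\<alpha> \<in> {1/2..1}" and be: "\<beta> \<in> {1/2..1}" and e0: "0 < e" and e1: "e < min 1 (1/4::real)"
  shows "1/100 * (lipconst (deriv cubeA) e)^2 \<le> symS (ReKGamma cubeA)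
         (Complex (- e * \<alpha>) (- (e ^ 3 * \<alpha> ^ 3))) 0 (Complex (e * \<beta>) (e ^ 3 * \<beta> ^ 3))"
proof -
  define a where "a = e * \<alpha>"
  define b where "b = e * \<beta>"
  have a: "e/2 \<le> a" "a \<le> e" using al e0 unfolding a_def
    by (auto intro: mult_left_mono[of "1/2" \<alpha> e, simplified] mult_left_le[of \<alpha> e, simplified])
  have b: "e/2 \<le> b" "b \<le> e" using be e0 unfolding b_def
    by (auto intro: mult_left_mono[of "1/2" \<beta> e, simplified] mult_left_le[of \<beta> e, simplified])
  have a0: "a > 0" "b > 0" using a b e0 by auto
  define z1 where "z1 = Complex (- e * \<alpha>) (- (e ^ 3 * \<alpha> ^ 3))"
  define z3 where "z3 = Complex (e * \<beta>) (e ^ 3 * \<beta> ^ 3)"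
  have r1: "Re z1 = -a" unfolding z1_def a_def by simp
  have r3: "Re z3 = b" unfolding z3_def b_def by simp
  have r2: "Re (0::complex) = 0" by simp
  define sa where "sa = sqrt (1 + 9 * a^4)"
  define sb where "sb = sqrt (1 + 9 * b^4)"
  define Q where "Q = a^2 - a*b + b^2"
  have k12: "ReKGamma cubeA z1 0 = (-2*a) / (sa * (1 + a^4))"
    using a0 by (subst ReK) (simp_all add: r1 sa_def)
  have k13: "ReKGamma cubeA z1 z3 = (-2*a + b) / (sa * (1 + Q^2))"
    using a0 by (subst ReK) (simp_all add: r1 r3 sa_def Q_def power2_eq_square algebra_simps)
  have k21: "ReKGamma cubeA 0 z1 = -a / (1 + a^4)"
    using a0 by (subst ReK) (simp_all add: r1)
  have k23: "ReKGamma cubeA 0 z3 = b / (1 + b^4)"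
    using a0 by (subst ReK) (simp_all add: r3)
  have k31: "ReKGamma cubeA z3 z1 = (2*b - a) / (sb * (1 + Q^2))"
    using a0 by (subst ReK) (simp_all add: r1 r3 sb_def Q_def power2_eq_square algebra_simps)
  have k32: "ReKGamma cubeA z3 0 = (2*b) / (sb * (1 + b^4))"
    using a0 by (subst ReK) (simp_all add: r3 sb_def)
  have L: "0 \<le> lipconst (deriv cubeA) e" "lipconst (deriv cubeA) e \<le> 6 * e"
    using lip_bound[OF e0] by auto
  have "1/100 * (lipconst (deriv cubeA) e)^2 \<le> 1/100 * (6*e)^2"
    using L by (intro mult_left_mono power_mono) auto
  also have "\<dots> \<le> symS (ReKGamma cubeA) z1 0 z3"
    unfolding symS_expand k12 k13 k21 k23 k31 k32
    using key_ineq[OF a b e0] e1 unfolding sa_def sb_def Q_def by simp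
  finally show ?thesis
    unfolding z1_def z3_def .
qed

theorem lemma1p4:
  shows "\<exists>\<delta>0::real. \<delta>0 > 0 \<and> (\<exists>c0::real. 0 < c0 \<and> c0 < 1 \<and>
    (\<forall>\<alpha> \<beta> \<epsilon> :: real. \<alpha> \<in> {1/2..1} \<longrightarrow> \<beta> \<in> {1/2..1} \<longrightarrow>
       0 < \<epsilon> \<longrightarrow> \<epsilon> < min 1 \<delta>0 \<longrightarrow>
       symS (ReKGamma cubeA)
         (Complex (- \<epsilon> * \<alpha>) (- (\<epsilon> ^ 3 * \<alpha> ^ 3)))
         0
         (Complex (\<epsilon> * \<beta>) (\<epsilon> ^ 3 * \<beta> ^ 3))
       \<ge> c0 * (lipconst (deriv cubeA) \<epsilon>)\<^sup>2))"
  apply (rule exI[of _ "1/4"])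
  apply (rule conjI, simp)
  apply (rule exI[of _ "1/100"])
  using main_bound by auto


end
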